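(* Let $R$ be a finite commutative ring with identity such that every residue field $R/\mathfrak{m}$, $\mathfrak{m}\in\mathrm{Max}(R)$, has odd characteristic. Then $$\chi\big(\mathrm{Reg}(\Gamma(R))\big)=\omega\big(\mathrm{Reg}(\Gamma(R))\big)=2^{|\mathrm{Max}(R)|}.$$
   Context: $Z(R)$ is the set of zero-divisors of $R$ (including $0$), $\mathrm{Reg}(R)=R\setminus Z(R)$ the set of regular elements, and $\mathrm{Max}(R)$ the set of maximal ideals. The total graph $T(\Gamma(R))$ is the simple graph with vertex set $R$ in which distinct $x,y$ are adjacent iff $x+y\in Z(R)$; $\mathrm{Reg}(\Gamma(R))$ is its induced subgraph on $\mathrm{Reg}(R)$. $\chi$ and $\omega$ denote chromatic and clique number. *)

theory Defs
  imports "HOL-Algebra.Algebra"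
begin

definition ring_char :: "('a, 'b) ring_scheme \<Rightarrow> nat" where
  "ring_char R = (if \<exists>n::nat. n > 0 \<and> [n] \<cdot>\<^bsub>R\<^esub> \<one>\<^bsub>R\<^esub> = \<zero>\<^bsub>R\<^esub>
                  then (LEAST n::nat. n > 0 \<and> [n] \<cdot>\<^bsub>R\<^esub> \<one>\<^bsub>R\<^esub> = \<zero>\<^bsub>R\<^esub>) else 0)"

definition zero_divisors :: "('a, 'b) ring_scheme \<Rightarrow> 'a set" where
  "zero_divisors R = {x \<in> carrier R. \<exists>y \<in> carrier R. y \<noteq> \<zero>\<^bsub>R\<^esub> \<and> x \<otimes>\<^bsub>R\<^esub> y = \<zero>\<^bsub>R\<^esub>}"

definition regular_elems :: "('a, 'b) ring_scheme \<Rightarrow> 'a set" where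
  "regular_elems R = carrier R - zero_divisors R"

definition max_ideals :: "('a, 'b) ring_scheme \<Rightarrow> 'a set set" where
  "max_ideals R = {I. maximalideal I R}"

text \<open>Adjacency of the total graph T(Gamma(R)).\<close>
definition total_adj :: "('a, 'b) ring_scheme \<Rightarrow> 'a \<Rightarrow> 'a \<Rightarrow> bool" where
  "total_adj R x y \<longleftrightarrow> x \<noteq> y \<and> x \<oplus>\<^bsub>R\<^esub> y \<in> zero_divisors R"

definition is_clique :: "'v set \<Rightarrow> ('v \<Rightarrow> 'v \<Rightarrow> bool) \<Rightarrow> 'v set \<Rightarrow> bool" where
  "is_clique V E C \<longleftrightarrow> C \<subseteq> V \<and> (\<forall>x\<in>C. \<forall>y\<in>C. x \<noteq> y \<longrightarrow> E x y)"

definition clique_number :: "'v set \<Rightarrow> ('v \<Rightarrow> 'v \<Rightarrow> bool) \<Rightarrow> nat" where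
  "clique_number V E = Max {card C | C. is_clique V E C \<and> finite C}"

definition proper_colouring :: "'v set \<Rightarrow> ('v \<Rightarrow> 'v \<Rightarrow> bool) \<Rightarrow> nat \<Rightarrow> ('v \<Rightarrow> nat) \<Rightarrow> bool" where
  "proper_colouring V E k f \<longleftrightarrow> f ` V \<subseteq> {..<k} \<and> (\<forall>x\<in>V. \<forall>y\<in>V. x \<noteq> y \<and> E x y \<longrightarrow> f x \<noteq> f y)"

definition chromatic_number :: "'v set \<Rightarrow> ('v \<Rightarrow> 'v \<Rightarrow> bool) \<Rightarrow> nat" where
  "chromatic_number V E = (LEAST k. \<exists>f. proper_colouring V E k f)"

end

theory Submission
  imports Defs
begin


lemma (in cring) char_two:
  assumes "maximalideal m R" "odd (ring_char (R Quot m))"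
  shows "\<one> \<oplus> \<one> \<notin> m"
proof
  assume A: "\<one> \<oplus> \<one> \<in> m"
  interpret maximalideal m R by fact
  interpret Q: ring "R Quot m" by (rule quotient_is_ring)
  have o: "\<one>\<^bsub>R Quot m\<^esub> = m +> \<one>" and z: "\<zero>\<^bsub>R Quot m\<^esub> = m"
    by (simp_all add: FactRing_def)
  have oc: "\<one>\<^bsub>R Quot m\<^esub> \<in> carrier (R Quot m)" by simp
  have "[(2::nat)] \<cdot>\<^bsub>R Quot m\<^esub> \<one>\<^bsub>R Quot m\<^esub> = \<one>\<^bsub>R Quot m\<^esub> \<oplus>\<^bsub>R Quot m\<^esub> \<one>\<^bsub>R Quot m\<^esub>"
    using oc by (simp add: numeral_2_eq_2 Q.add.nat_pow_Suc)
  also have "\<dots> = m +> (\<one> \<oplus> \<one>)"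
    by (simp add: o FactRing_def a_rcos_sum)
  also have "\<dots> = m" using A by (simp add: a_rcos_zero is_ideal)
  finally have two: "[(2::nat)] \<cdot>\<^bsub>R Quot m\<^esub> \<one>\<^bsub>R Quot m\<^esub> = \<zero>\<^bsub>R Quot m\<^esub>" using z by simp
  have one: "[(1::nat)] \<cdot>\<^bsub>R Quot m\<^esub> \<one>\<^bsub>R Quot m\<^esub> \<noteq> \<zero>\<^bsub>R Quot m\<^esub>"
  proof
    assume "[(1::nat)] \<cdot>\<^bsub>R Quot m\<^esub> \<one>\<^bsub>R Quot m\<^esub> = \<zero>\<^bsub>R Quot m\<^esub>"
    moreover have "[(1::nat)] \<cdot>\<^bsub>R Quot m\<^esub> \<one>\<^bsub>R Quot m\<^esub> = \<one>\<^bsub>R Quot m\<^esub>"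
      using oc by (simp add: Q.add.nat_pow_Suc)
    ultimately have "m +> \<one> = m" using o z by simp
    hence "\<one> \<in> m" by (simp add: rcos_const_imp_mem)
    thus False using I_notcarr one_imp_carrier by blast
  qed
  have "(LEAST n::nat. n > 0 \<and> [n] \<cdot>\<^bsub>R Quot m\<^esub> \<one>\<^bsub>R Quot m\<^esub> = \<zero>\<^bsub>R Quot m\<^esub>) = 2"
  proof (rule Least_equality)
    fix n :: nat assume "0 < n \<and> [n] \<cdot>\<^bsub>R Quot m\<^esub> \<one>\<^bsub>R Quot m\<^esub> = \<zero>\<^bsub>R Quot m\<^esub>"
    with one show "2 \<le> n" by (cases "n = 1") auto
  qed (use two in auto)
  hence "ring_char (R Quot m) = 2" unfolding ring_char_def using two
    by (metis zero_less_numeral)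
  with assms(2) show False by simp
qed


lemma (in cring) unit_not_zd: "u \<in> Units R \<Longrightarrow> u \<notin> zero_divisors R"
proof
  assume u: "u \<in> Units R" and "u \<in> zero_divisors R"
  then obtain y where y: "y \<in> carrier R" "y \<noteq> \<zero>" "u \<otimes> y = \<zero>"
    unfolding zero_divisors_def by auto
  have "y = inv u \<otimes> (u \<otimes> y)" using u y
    by (metis Units_closed Units_inv_closed Units_l_inv l_one m_assoc)
  also have "\<dots> = \<zero>" using y u by simp
  finally show False using y by simp
qed

lemma (in cring) nonunit_zd:
  assumes fin: "finite (carrier R)" and z: "z \<in> carrier R" "z \<notin> Units R"
  shows "z \<in> zero_divisors R"
proof (cases "inj_on (\<lambda>a. z \<otimes> a) (carrier R)")
  case True
  have "(\<lambda>a. z \<otimes> a) ` carrier R = carrier R"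
    by (rule endo_inj_surj[OF fin _ True]) (use z in auto)
  then obtain a where a: "a \<in> carrier R" "z \<otimes> a = \<one>"
    by (metis imageE one_closed)
  hence "z \<in> Units R" using z unfolding Units_def by (auto simp: m_comm)
  with z show ?thesis by simp
next
  case False
  then obtain a b where ab: "a \<in> carrier R" "b \<in> carrier R" "a \<noteq> b" "z \<otimes> a = z \<otimes> b"
    unfolding inj_on_def by auto
  have "z \<otimes> (a \<ominus> b) = z \<otimes> a \<ominus> z \<otimes> b" using ab z by algebra
  also have "\<dots> = \<zero>" using ab z by simp
  finally have "z \<otimes> (a \<ominus> b) = \<zero>" .
  moreover have "a \<ominus> b \<noteq> \<zero>" using ab by (metis r_right_minus_eq)
  ultimately show ?thesis using ab z unfolding zero_divisors_def
    by (intro CollectI conjI bexI[of _ "a \<ominus> b"]) auto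
qed

lemma (in cring) regular_eq_units:
  assumes "finite (carrier R)" shows "regular_elems R = Units R"
proof
  show "regular_elems R \<subseteq> Units R"
  proof
    fix x assume "x \<in> regular_elems R"
    hence "x \<in> carrier R" "x \<notin> zero_divisors R" unfolding regular_elems_def by auto
    thus "x \<in> Units R" using nonunit_zd[OF assms] by blast
  qed
  show "Units R \<subseteq> regular_elems R"
    using unit_not_zd Units_closed unfolding regular_elems_def by blast
qed

lemma (in cring) max_not_unit:
  assumes "maximalideal m R" "z \<in> m" shows "z \<notin> Units R"
proof
  assume u: "z \<in> Units R"
  interpret maximalideal m R by fact
  have "inv z \<otimes> z \<in> m" by (rule I_l_closed[OF assms(2) Units_inv_closed[OF u]])
  moreover have "inv z \<otimes> z = \<one>" by (rule Units_l_inv[OF u])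
  ultimately have "\<one> \<in> m" by simp
  thus False using I_notcarr one_imp_carrier by blast
qed

lemma (in cring) nonunit_in_max:
  assumes fin: "finite (carrier R)" and z: "z \<in> carrier R" "z \<notin> Units R"
  shows "\<exists>m. maximalideal m R \<and> z \<in> m"
proof -
  define P where "P = {J. ideal J R \<and> z \<in> J \<and> \<one> \<notin> J}"
  have "PIdl z \<in> P"
  proof -
    have "\<one> \<notin> PIdl z"
    proof
      assume "\<one> \<in> PIdl z"
      then obtain x where "x \<in> carrier R" "\<one> = x \<otimes> z" unfolding cgenideal_def by auto
      hence "z \<in> Units R" using z unfolding Units_def by (auto simp: m_comm)
      with z show False by simp
    qed
    thus ?thesis unfolding P_def using z cgenideal_ideal cgenideal_self by auto
  qed
  have Psub: "P \<subseteq> Pow (carrier R)"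
  proof
    fix J assume "J \<in> P"
    hence "ideal J R" unfolding P_def by simp
    hence "J \<subseteq> carrier R" by (rule ideal.Icarr[THEN subsetI])
    thus "J \<in> Pow (carrier R)" by simp
  qed
  have finP: "finite P" using Psub finite_Pow_iff[THEN iffD2, OF fin] by (rule finite_subset)
  define k where "k = Max (card ` P)"
  have "k \<in> card ` P" unfolding k_def using finP \<open>PIdl z \<in> P\<close> by (intro Max_in) auto
  then obtain J where J: "J \<in> P" "card J = k" by auto
  have kmax: "card J' \<le> k" if "J' \<in> P" for J' unfolding k_def using finP that by simp
  have "maximalideal J R"
  proof (rule maximalidealI)
    show "ideal J R" using J unfolding P_def by auto
    show "carrier R \<noteq> J" using J unfolding P_def by auto
    fix J' assume J': "ideal J' R" "J \<subseteq> J'" "J' \<subseteq> carrier R"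
    show "J' = J \<or> J' = carrier R"
    proof (cases "\<one> \<in> J'")
      case True thus ?thesis using J'(1) ideal.one_imp_carrier by blast
    next
      case False
      hence "J' \<in> P" using J' J unfolding P_def by auto
      hence c1: "card J' \<le> card J" using kmax J by simp
      have fJ': "finite J'" using J'(3) fin by (rule finite_subset)
      have "card J \<le> card J'" using fJ' J'(2) by (rule card_mono)
      hence "card J = card J'" using c1 by simp
      hence "J = J'" using card_subset_eq[OF fJ' J'(2)] by simp
      thus ?thesis by simp
    qed
  qed
  thus ?thesis using J unfolding P_def by auto
qed

lemma (in cring) adj_iff:
  assumes fin: "finite (carrier R)" and xy: "x \<in> Units R" "y \<in> Units R"
  shows "x \<oplus> y \<in> zero_divisors R \<longleftrightarrow> (\<exists>m\<in>max_ideals R. x \<oplus> y \<in> m)"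
proof -
  have c: "x \<oplus> y \<in> carrier R" using xy by (blast intro: add.m_closed Units_closed)
  show ?thesis
  proof
    assume "x \<oplus> y \<in> zero_divisors R"
    hence "x \<oplus> y \<notin> Units R" using unit_not_zd by blast
    thus "\<exists>m\<in>max_ideals R. x \<oplus> y \<in> m" using nonunit_in_max[OF fin c]
      unfolding max_ideals_def by auto
  next
    assume "\<exists>m\<in>max_ideals R. x \<oplus> y \<in> m"
    hence "x \<oplus> y \<notin> Units R" using max_not_unit unfolding max_ideals_def by auto
    thus "x \<oplus> y \<in> zero_divisors R" using nonunit_zd[OF fin c] by blast
  qed
qed



lemma (in cring) avoid:
  assumes "finite S" "S \<subseteq> max_ideals R" "maximalideal m0 R" "m0 \<notin> S"
  shows "\<exists>e\<in>carrier R. e \<notin> m0 \<and> (\<forall>m\<in>S. e \<in> m)"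
  using assms
proof (induction S rule: finite_induct)
  case empty
  interpret maximalideal m0 R by fact
  have "\<one> \<notin> m0" using I_notcarr one_imp_carrier by blast
  thus ?case by auto
next
  case (insert m S)
  then obtain e where e: "e \<in> carrier R" "e \<notin> m0" "\<forall>m\<in>S. e \<in> m" by auto
  have mm: "maximalideal m R" using insert unfolding max_ideals_def by auto
  interpret M0: maximalideal m0 R by fact
  interpret M: maximalideal m R by (rule mm)
  have "\<not> m \<subseteq> m0"
  proof
    assume "m \<subseteq> m0"
    hence "m0 = m \<or> m0 = carrier R" using M.I_maximal M0.is_ideal M0.a_subset by blast
    thus False using insert M0.I_notcarr by auto
  qed
  then obtain a where a: "a \<in> m" "a \<notin> m0" by auto
  have ac: "a \<in> carrier R" using a M.a_subset by auto
  have pr: "primeideal m0 R" by (rule maximalideal_prime) fact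
  have "a \<otimes> e \<notin> m0" using primeideal.I_prime[OF pr ac e(1)] a e by auto
  moreover have "a \<otimes> e \<in> m" using M.I_r_closed[OF a(1) e(1)] .
  moreover have "\<forall>m'\<in>S. a \<otimes> e \<in> m'"
  proof
    fix m' assume "m' \<in> S"
    hence "maximalideal m' R" using insert unfolding max_ideals_def by auto
    thus "a \<otimes> e \<in> m'" using e \<open>m' \<in> S\<close> ac by (simp add: ideal.I_l_closed maximalideal.axioms(1))
  qed
  ultimately show ?case using ac e by (intro bexI[of _ "a \<otimes> e"]) auto
qed

lemma (in cring) inv_mod:
  assumes "maximalideal m0 R" "e \<in> carrier R" "e \<notin> m0"
  shows "\<exists>r\<in>carrier R. r \<otimes> e \<ominus> \<one> \<in> m0"
proof -
  interpret M0: maximalideal m0 R by fact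
  define J where "J = m0 <+>\<^bsub>R\<^esub> PIdl e"
  have idJ: "ideal J R" unfolding J_def by (rule add_ideals[OF M0.is_ideal cgenideal_ideal[OF assms(2)]])
  have m0J: "m0 \<subseteq> J"
  proof
    fix i assume i: "i \<in> m0"
    have "\<zero> \<in> PIdl e" using assms(2) unfolding cgenideal_def by (auto intro!: exI[of _ "\<zero>"])
    moreover have "i = i \<oplus> \<zero>" using i M0.a_subset by auto
    ultimately show "i \<in> J" using i unfolding J_def set_add_def' by blast
  qed
  have eJ: "e \<in> J"
  proof -
    have "e \<in> PIdl e" by (rule cgenideal_self[OF assms(2)])
    moreover have "e = \<zero> \<oplus> e" using assms(2) by simp
    ultimately show ?thesis unfolding J_def set_add_def' using M0.additive_subgroup_axioms
      by (metis UN_iff additive_subgroup.zero_closed singletonI)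
  qed
  have Jc: "J \<subseteq> carrier R" using ideal.Icarr[OF idJ] by blast
  have "J = m0 \<or> J = carrier R" by (rule M0.I_maximal[OF idJ m0J Jc])
  hence "J = carrier R" using eJ assms(3) by auto
  hence "\<one> \<in> J" by simp
  then obtain i x where ix: "i \<in> m0" "x \<in> PIdl e" "\<one> = i \<oplus> x" unfolding J_def set_add_def' by blast
  then obtain r where r: "r \<in> carrier R" "x = r \<otimes> e" unfolding cgenideal_def by auto
  have ic: "i \<in> carrier R" using ix M0.a_subset by auto
  have "r \<otimes> e \<ominus> \<one> = \<ominus> i" using ix r ic assms(2) by algebra
  moreover have "\<ominus> i \<in> m0" using ix(1) by (rule M0.a_inv_closed)
  ultimately have "r \<otimes> e \<ominus> \<one> \<in> m0" by simp
  thus ?thesis using r(1) by blast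
qed

lemma (in cring) crt:
  assumes "finite S" "S \<subseteq> max_ideals R" "\<forall>m\<in>S. t m \<in> carrier R"
  shows "\<exists>x\<in>carrier R. \<forall>m\<in>S. x \<ominus> t m \<in> m"
  using assms
proof (induction S rule: finite_induct)
  case empty
  thus ?case by auto
next
  case (insert m0 S)
  then obtain x where x: "x \<in> carrier R" "\<forall>m\<in>S. x \<ominus> t m \<in> m" by auto
  have mm: "maximalideal m0 R" using insert unfolding max_ideals_def by auto
  interpret M0: maximalideal m0 R by (rule mm)
  obtain e where e: "e \<in> carrier R" "e \<notin> m0" "\<forall>m\<in>S. e \<in> m"
    using avoid[OF insert(1) _ mm insert(2)] insert(4) by auto
  obtain r where r: "r \<in> carrier R" "r \<otimes> e \<ominus> \<one> \<in> m0" using inv_mod[OF mm e(1,2)] by auto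
  have tc: "t m0 \<in> carrier R" using insert by auto
  define x' where "x' = x \<oplus> (r \<otimes> e) \<otimes> (t m0 \<ominus> x)"
  have x'c: "x' \<in> carrier R" unfolding x'_def using x r e tc by simp
  have "\<forall>m\<in>insert m0 S. x' \<ominus> t m \<in> m"
  proof
    fix m assume m: "m \<in> insert m0 S"
    show "x' \<ominus> t m \<in> m"
    proof (cases "m = m0")
      case True
      have "x' \<ominus> t m0 = (r \<otimes> e \<ominus> \<one>) \<otimes> (t m0 \<ominus> x)"
        unfolding x'_def using x r e tc by algebra
      moreover have "(r \<otimes> e \<ominus> \<one>) \<otimes> (t m0 \<ominus> x) \<in> m0"
        using M0.I_r_closed r(2) x tc by simp
      ultimately show ?thesis using True by simp
    next
      case False
      hence mS: "m \<in> S" using m by auto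
      hence "maximalideal m R" using insert unfolding max_ideals_def by auto
      then interpret M: maximalideal m R .
      have tm: "t m \<in> carrier R" using insert mS by auto
      have "x' \<ominus> t m = (x \<ominus> t m) \<oplus> (r \<otimes> e) \<otimes> (t m0 \<ominus> x)"
        unfolding x'_def using x r e tc tm by algebra
      moreover have "r \<otimes> e \<in> m" using M.I_l_closed e mS r by auto
      hence "(r \<otimes> e) \<otimes> (t m0 \<ominus> x) \<in> m" using M.I_r_closed x tc by simp
      ultimately show ?thesis using x mS M.a_closed by simp
    qed
  qed
  thus ?case using x'c by auto
qed

lemma (in cring) sign_exists:
  assumes fin: "finite (carrier R)" and mm: "maximalideal m R" and two: "\<one> \<oplus> \<one> \<notin> m"
  shows "\<exists>s::'a\<Rightarrow>bool. \<forall>x\<in>carrier R. \<forall>y\<in>carrier R. x \<notin> m \<longrightarrow> x \<oplus> y \<in> m \<longrightarrow> s x \<noteq> s y"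
proof -
  interpret M: maximalideal m R by (rule mm)
  have pr: "primeideal m R" by (rule maximalideal_prime) fact
  obtain h :: "'a \<Rightarrow> nat" where h: "inj_on h (carrier R)"
    using finite_imp_inj_to_nat_seg[OF fin] by blast
  define C where "C x = {z\<in>carrier R. z \<ominus> x \<in> m}" for x
  define key where "key x = Min (h ` C x)" for x
  define s where "s x = (key x < key (\<ominus> x))" for x
  have Cfin: "finite (C x)" for x unfolding C_def using fin by auto
  have Cne: "x \<in> C x" if "x \<in> carrier R" for x
  proof -
    have "x \<ominus> x = \<zero>" using that by (simp add: r_right_minus_eq)
    moreover have "\<zero> \<in> m" by (rule additive_subgroup.zero_closed[OF M.additive_subgroup_axioms])
    ultimately have "x \<ominus> x \<in> m" by simp
    thus ?thesis unfolding C_def using that by simp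
  qed
  have keyin: "\<exists>a\<in>C x. key x = h a" if "x \<in> carrier R" for x
  proof -
    have "key x \<in> h ` C x" unfolding key_def using Cfin Cne[OF that] by (intro Min_in) auto
    thus ?thesis by auto
  qed
  have Ceq: "C y = C (\<ominus> x)" if xy: "x \<in> carrier R" "y \<in> carrier R" "x \<oplus> y \<in> m" for x y
  proof -
    have "z \<ominus> y \<in> m \<longleftrightarrow> z \<ominus> \<ominus> x \<in> m" if z: "z \<in> carrier R" for z
    proof
      assume "z \<ominus> y \<in> m"
      moreover have "z \<ominus> \<ominus> x = (z \<ominus> y) \<oplus> (x \<oplus> y)" using z xy by algebra
      ultimately show "z \<ominus> \<ominus> x \<in> m" using xy M.a_closed by simp
    next
      assume "z \<ominus> \<ominus> x \<in> m"
      moreover have "z \<ominus> y = (z \<ominus> \<ominus> x) \<ominus> (x \<oplus> y)" using z xy by algebra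
      ultimately show "z \<ominus> y \<in> m" using xy M.a_closed M.a_inv_closed unfolding a_minus_def by simp
    qed
    thus ?thesis unfolding C_def by auto
  qed
  have keyne: "key x \<noteq> key (\<ominus> x)" if x: "x \<in> carrier R" "x \<notin> m" for x
  proof
    assume eq: "key x = key (\<ominus> x)"
    obtain a where a: "a \<in> C x" "key x = h a" using keyin x by blast
    obtain b where b: "b \<in> C (\<ominus> x)" "key (\<ominus> x) = h b" using keyin x by blast
    have "a = b" using a b eq h unfolding C_def inj_on_def by auto
    hence ab: "a \<in> carrier R" "a \<ominus> x \<in> m" "a \<ominus> \<ominus> x \<in> m" using a b unfolding C_def by auto
    have "(\<one> \<oplus> \<one>) \<otimes> x = (a \<ominus> \<ominus> x) \<ominus> (a \<ominus> x)" using ab x by algebra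
    hence "(\<one> \<oplus> \<one>) \<otimes> x \<in> m" using ab M.a_closed M.a_inv_closed unfolding a_minus_def by simp
    hence "\<one> \<oplus> \<one> \<in> m \<or> x \<in> m" using primeideal.I_prime[OF pr, of "\<one> \<oplus> \<one>" x] x by simp
    thus False using two x by auto
  qed
  show ?thesis
  proof (intro exI[of _ s] ballI impI)
    fix x y assume x: "x \<in> carrier R" "x \<notin> m" and y: "y \<in> carrier R" and xy: "x \<oplus> y \<in> m"
    have "C y = C (\<ominus> x)" using Ceq x y xy by blast
    moreover have "C (\<ominus> y) = C x"
    proof -
      have "y \<oplus> x \<in> m" using xy x y by (simp add: a_comm)
      hence "C x = C (\<ominus> y)" using Ceq x y by blast
      thus ?thesis by simp
    qed
    ultimately have "key y = key (\<ominus> x)" "key (\<ominus> y) = key x" unfolding key_def by auto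
    thus "s x \<noteq> s y" unfolding s_def using keyne[OF x] by auto
  qed
qed



lemma graph_final:
  assumes finV: "finite V" and pc: "proper_colouring V E k f" and cl: "is_clique V E C" and cC: "card C = k"
  shows "chromatic_number V E = k \<and> clique_number V E = k"
proof -
  have bound: "card C' \<le> k'" if c': "is_clique V E C'" and p': "proper_colouring V E k' f'" for C' k' f'
  proof -
    have sub: "C' \<subseteq> V" using c' unfolding is_clique_def by auto
    have "inj_on f' C'"
    proof (rule inj_onI)
      fix x y assume "x \<in> C'" "y \<in> C'" "f' x = f' y"
      thus "x = y" using c' p' sub unfolding is_clique_def proper_colouring_def by blast
    qed
    moreover have "f' ` C' \<subseteq> {..<k'}" using p' sub unfolding proper_colouring_def by auto
    ultimately have "card C' \<le> card {..<k'}" by (intro card_inj_on_le) auto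
    thus ?thesis by simp
  qed
  have "chromatic_number V E = k"
    unfolding chromatic_number_def
  proof (rule Least_equality)
    show "\<exists>f. proper_colouring V E k f" using pc by blast
    fix y assume "\<exists>f. proper_colouring V E y f"
    then obtain f' where "proper_colouring V E y f'" by blast
    thus "k \<le> y" using bound[OF cl] cC by auto
  qed
  moreover have "clique_number V E = k"
    unfolding clique_number_def
  proof (rule Max_eqI)
    have "{card C |C. is_clique V E C \<and> finite C} \<subseteq> card ` Pow V"
      unfolding is_clique_def by auto
    thus "finite {card C |C. is_clique V E C \<and> finite C}"
      using finV by (meson finite_Pow_iff finite_imageI finite_subset)
    show "y \<le> k" if "y \<in> {card C |C. is_clique V E C \<and> finite C}" for y
      using that bound pc by blast
    have "finite C" using cl finV unfolding is_clique_def by (auto intro: finite_subset)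
    thus "k \<in> {card C |C. is_clique V E C \<and> finite C}" using cl cC by blast
  qed
  ultimately show ?thesis by simp
qed

lemma (in cring) pm:
  assumes mm: "maximalideal m R" and two: "\<one> \<oplus> \<one> \<notin> m"
    and ab: "a \<in> carrier R" "b \<in> carrier R" "a \<ominus> \<one> \<in> m" "b \<ominus> \<ominus> \<one> \<in> m"
  shows "a \<oplus> b \<in> m \<and> a \<noteq> b"
proof -
  interpret M: maximalideal m R by (rule mm)
  have "a \<oplus> b = (a \<ominus> \<one>) \<oplus> (b \<ominus> \<ominus> \<one>)" using ab by algebra
  hence s: "a \<oplus> b \<in> m" using ab M.a_closed by simp
  have "a \<noteq> b"
  proof
    assume "a = b"
    hence "\<one> \<oplus> \<one> = (b \<ominus> \<ominus> \<one>) \<oplus> \<ominus> (a \<ominus> \<one>)" using ab by algebra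
    hence "\<one> \<oplus> \<one> \<in> m" using ab M.a_closed M.a_inv_closed by simp
    thus False using two by simp
  qed
  with s show ?thesis by simp
qed


lemma (in cring) main:
  assumes fin: "finite (carrier R)" and odd: "\<forall>m \<in> max_ideals R. odd (ring_char (R Quot m))"
  shows "chromatic_number (regular_elems R) (total_adj R) = 2 ^ card (max_ideals R)
       \<and> clique_number (regular_elems R) (total_adj R) = 2 ^ card (max_ideals R)"
proof -
  define M where "M = max_ideals R"
  define V where "V = regular_elems R"
  have V: "V = Units R" unfolding V_def by (rule regular_eq_units[OF fin])
  have mmax: "maximalideal m R" if "m \<in> M" for m using that unfolding M_def max_ideals_def by simp
  have two: "\<one> \<oplus> \<one> \<notin> m" if "m \<in> M" for m
    using char_two[OF mmax[OF that]] odd that unfolding M_def by blast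
  have "M \<subseteq> Pow (carrier R)"
  proof
    fix m assume "m \<in> M"
    hence "ideal m R" using mmax maximalideal.axioms(1) by blast
    thus "m \<in> Pow (carrier R)" using ideal.Icarr[OF \<open>ideal m R\<close>] by blast
  qed
  hence finM: "finite M" using finite_Pow_iff[THEN iffD2, OF fin] by (rule finite_subset)
  define P where "P m s = (\<forall>x\<in>carrier R. \<forall>y\<in>carrier R. x \<notin> m \<longrightarrow> x \<oplus> y \<in> m \<longrightarrow> s x \<noteq> s y)"
    for m and s :: "'a \<Rightarrow> bool"
  define S where "S m = (SOME s. P m s)" for m
  have S: "S m x \<noteq> S m y" if "m \<in> M" "x \<in> carrier R" "y \<in> carrier R" "x \<notin> m" "x \<oplus> y \<in> m" for m x y
  proof -
    have "\<exists>s. P m s" unfolding P_def by (rule sign_exists[OF fin mmax[OF that(1)] two[OF that(1)]])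
    hence "P m (S m)" unfolding S_def by (rule someI_ex)
    thus ?thesis unfolding P_def using that(2-5) by blast
  qed
  define F where "F = PiE M (\<lambda>_. UNIV :: bool set)"
  have finF: "finite F" unfolding F_def using finM by (simp add: finite_PiE)
  have cardF: "card F = 2 ^ card M" unfolding F_def using finM by (simp add: card_PiE)
  obtain g where g: "bij_betw g F {0..<card F}" using ex_bij_betw_finite_nat[OF finF] by blast
  define col where "col x = g (\<lambda>m\<in>M. S m x)" for x
  have pc: "proper_colouring V (total_adj R) (2 ^ card M) col"
    unfolding proper_colouring_def
  proof (intro conjI ballI impI)
    show "col ` V \<subseteq> {..<2 ^ card M}"
    proof
      fix c assume "c \<in> col ` V"
      then obtain x where "c = col x" by auto
      moreover have "(\<lambda>m\<in>M. S m x) \<in> F" unfolding F_def by simp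
      ultimately show "c \<in> {..<2 ^ card M}" using bij_betw_apply[OF g] cardF unfolding col_def by auto
    qed
    fix x y assume x: "x \<in> V" and y: "y \<in> V" and xy: "x \<noteq> y \<and> total_adj R x y"
    have xu: "x \<in> Units R" and yu: "y \<in> Units R" using x y V by auto
    have "x \<oplus> y \<in> zero_divisors R" using xy unfolding total_adj_def by simp
    then obtain m where m: "m \<in> M" "x \<oplus> y \<in> m" using adj_iff[OF fin xu yu] unfolding M_def by blast
    have "x \<notin> m" using max_not_unit[OF mmax[OF m(1)]] xu by blast
    hence "S m x \<noteq> S m y" using S[OF m(1) _ _ _ m(2)] xu yu by blast
    hence ne: "(\<lambda>m\<in>M. S m x) \<noteq> (\<lambda>m\<in>M. S m y)" using m(1) by (metis restrict_apply')
    have "(\<lambda>m\<in>M. S m x) \<in> F" "(\<lambda>m\<in>M. S m y) \<in> F" unfolding F_def by simp_all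
    thus "col x \<noteq> col y" using ne g unfolding col_def bij_betw_def inj_on_def by blast
  qed
  define t where "t \<epsilon> m = (if \<epsilon> m then \<one> else \<ominus> \<one>)" for \<epsilon> :: "'a set \<Rightarrow> bool" and m
  have tc: "t \<epsilon> m \<in> carrier R" for \<epsilon> m unfolding t_def by simp
  define Q where "Q \<epsilon> x = (x \<in> carrier R \<and> (\<forall>m\<in>M. x \<ominus> t \<epsilon> m \<in> m))" for \<epsilon> x
  define Xf where "Xf \<epsilon> = (SOME x. Q \<epsilon> x)" for \<epsilon>
  have XQ: "Q \<epsilon> (Xf \<epsilon>)" for \<epsilon>
  proof -
    have "\<exists>x\<in>carrier R. \<forall>m\<in>M. x \<ominus> t \<epsilon> m \<in> m"
      by (rule crt[OF finM]) (auto simp: M_def tc)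
    hence "\<exists>x. Q \<epsilon> x" unfolding Q_def by blast
    thus ?thesis unfolding Xf_def by (rule someI_ex)
  qed
  have Xf: "\<And>\<epsilon>. \<epsilon> \<in> F \<Longrightarrow> Xf \<epsilon> \<in> carrier R"
    "\<And>\<epsilon> m. \<epsilon> \<in> F \<Longrightarrow> m \<in> M \<Longrightarrow> Xf \<epsilon> \<ominus> t \<epsilon> m \<in> m"
    using XQ unfolding Q_def by auto
  have unitX: "Xf \<epsilon> \<in> Units R" if eF: "\<epsilon> \<in> F" for \<epsilon>
  proof (rule ccontr)
    assume nu: "Xf \<epsilon> \<notin> Units R"
    obtain m where m: "maximalideal m R" "Xf \<epsilon> \<in> m"
      using nonunit_in_max[OF fin Xf(1)[OF eF] nu] by blast
    have mM: "m \<in> M" unfolding M_def max_ideals_def using m(1) by simp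
    interpret MM: maximalideal m R by (rule m(1))
    have d: "Xf \<epsilon> \<ominus> t \<epsilon> m \<in> m" by (rule Xf(2)[OF eF mM])
    have eq: "t \<epsilon> m = Xf \<epsilon> \<ominus> (Xf \<epsilon> \<ominus> t \<epsilon> m)" using Xf(1)[OF eF] tc by algebra
    have ss: "Xf \<epsilon> \<ominus> (Xf \<epsilon> \<ominus> t \<epsilon> m) \<in> m"
      unfolding a_minus_def by (rule MM.a_closed[OF m(2) MM.a_inv_closed[OF d[unfolded a_minus_def]]])
    have tm: "t \<epsilon> m \<in> m" by (subst eq) (rule ss)
    have "\<one> \<in> m"
    proof (cases "\<epsilon> m")
      case True thus ?thesis using tm unfolding t_def by simp
    next
      case False hence "\<ominus> \<one> \<in> m" using tm unfolding t_def by simp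
      hence "\<ominus> (\<ominus> \<one>) \<in> m" by (rule MM.a_inv_closed)
      thus ?thesis by simp
    qed
    hence "\<one> \<notin> Units R" by (rule max_not_unit[OF m(1)])
    thus False using Units_one_closed by blast
  qed
  have diff: "Xf \<epsilon> \<oplus> Xf \<delta> \<in> zero_divisors R \<and> Xf \<epsilon> \<noteq> Xf \<delta>"
    if eF: "\<epsilon> \<in> F" "\<delta> \<in> F" "\<epsilon> \<noteq> \<delta>" for \<epsilon> \<delta>
  proof -
    obtain m where m: "m \<in> M" "\<epsilon> m \<noteq> \<delta> m"
      using eF PiE_ext[of \<epsilon> M "\<lambda>_. UNIV" \<delta>] unfolding F_def by blast
    have sm: "Xf \<epsilon> \<oplus> Xf \<delta> \<in> m \<and> Xf \<epsilon> \<noteq> Xf \<delta>"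
    proof (cases "\<epsilon> m")
      case True
      hence "\<not> \<delta> m" using m by simp
      thus ?thesis using pm[OF mmax[OF m(1)] two[OF m(1)] Xf(1)[OF eF(1)] Xf(1)[OF eF(2)]]
        Xf(2)[OF eF(1) m(1)] Xf(2)[OF eF(2) m(1)] True unfolding t_def by simp
    next
      case False
      hence "\<delta> m" using m by simp
      hence "Xf \<delta> \<oplus> Xf \<epsilon> \<in> m \<and> Xf \<delta> \<noteq> Xf \<epsilon>"
        using pm[OF mmax[OF m(1)] two[OF m(1)] Xf(1)[OF eF(2)] Xf(1)[OF eF(1)]]
        Xf(2)[OF eF(1) m(1)] Xf(2)[OF eF(2) m(1)] False unfolding t_def by simp
      moreover have "Xf \<epsilon> \<oplus> Xf \<delta> = Xf \<delta> \<oplus> Xf \<epsilon>" by (rule a_comm[OF Xf(1)[OF eF(1)] Xf(1)[OF eF(2)]])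
      ultimately show ?thesis by auto
    qed
    have u: "Xf \<epsilon> \<in> Units R" "Xf \<delta> \<in> Units R" using unitX eF by auto
    show ?thesis using sm adj_iff[OF fin u] m(1) unfolding M_def by blast
  qed
  define C where "C = Xf ` F"
  have injX: "inj_on Xf F" unfolding inj_on_def using diff by blast
  have cardC: "card C = 2 ^ card M" unfolding C_def using card_image[OF injX] cardF by simp
  have cl: "is_clique V (total_adj R) C"
    unfolding is_clique_def
  proof (intro conjI ballI impI)
    show "C \<subseteq> V" unfolding C_def V using unitX by blast
    fix x y assume "x \<in> C" "y \<in> C" "x \<noteq> y"
    then obtain \<epsilon> \<delta> where ed: "\<epsilon> \<in> F" "\<delta> \<in> F" "x = Xf \<epsilon>" "y = Xf \<delta>" unfolding C_def by blast
    hence "\<epsilon> \<noteq> \<delta>" using \<open>x \<noteq> y\<close> by blast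
    thus "total_adj R x y" using diff[OF ed(1,2)] ed(3,4) unfolding total_adj_def by simp
  qed
  have finV: "finite V" unfolding V using fin Units_closed by (blast intro: finite_subset)
  show ?thesis using graph_final[OF finV pc cl cardC] unfolding V_def M_def .
qed

theorem corollary16:
  fixes R :: "('a, 'b) ring_scheme"
  assumes "cring R"
    and "finite (carrier R)"
    and "\<forall>m \<in> max_ideals R. odd (ring_char (R Quot m))"
  shows "chromatic_number (regular_elems R) (total_adj R)
           = clique_number (regular_elems R) (total_adj R)
       \<and> clique_number (regular_elems R) (total_adj R) = 2 ^ card (max_ideals R)"
  using cring.main[OF assms] by simp


end
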